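(* Let $L$ be a language and suppose that a language $A$ over an alphabet $\Sigma$ is definable by a sentence $\varphi\in Q^{\star}_L\mathrm{FO}$ of the form $Q^\star_L R_1,\dots,R_t[\psi_1,\dots,\psi_{s-1}]$ in which all quantified relation variables $R_i$ have arity $k$. Let $\sharp\notin\Sigma$. Then the language $A^*=\{w\,\sharp^{|w|^k-|w|} : w\in A\}$ over $\Sigma\cup\{\sharp\}$ is definable in $\mathrm{FO}(Q^{\star}_L,+,\times)$.
   Context: Strings as structures: a nonempty string $b_0\cdots b_{n-1}$ over the ordered alphabet $(a_1,\dots,a_s)$ is the structure with universe $\{0,\dots,n-1\}$, natural order $<$, and unary predicates $P_{a_i}=\{j:b_j=a_i\}$. FO uses $=$, $<$, these predicates, $\min,\max$, connectives, $\exists,\forall$; "$+,\times$" means the ternary relations $i+j=k$ and $i\cdot j=k$ are additionally built in. Quantifier $Q^\star_L$ of arity $m\ge1$: for $L$ over $(a_1,\dots,a_s)$ and distinct $m$-ary relation variables $\overline X=(X_1,\dots,X_t)$, over universe $\{0,\dots,n-1\}$ encode $A_i\subseteq\{0,\dots,n-1\}^m$ by the bit string $s^i_0\cdots s^i_{n^m-1}$ with $s^i_j=1$ iff the $j$-th tuple in lexicographic order belongs to $A_i$; order all assignments lexicographically by the concatenated code $s^1_0\cdots s^1_{n^m-1}\cdots s^t_0\cdots s^t_{n^m-1}$. Then $\mathcal A\models Q^\star_L\overline X[\varphi_1,\dots,\varphi_{s-1}]$ iff the word whose $i$-th letter is $a_j$ for the least $j$ with $\varphi_j$ true at the $i$-th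 assignment (and $a_s$ if none) lies in $L$. $Q^\star_L\mathrm{FO}$ consists of formulas $Q^\star_L\overline X[\varphi_1,\dots,\varphi_{s-1}]$, $\overline X$ relation variables of some arity, $\varphi_i$ first-order (only $<$ built in). $\mathrm{FO}(Q^\star_L,+,\times)$ denotes first-order logic with built-in $<,+,\times$, extended by unary second-order variables and closed under application of the monadic ($m=1$) quantifier $Q^\star_L$. *)

theory Defs
  imports Main "HOL-Library.List_Lexorder"
begin

datatype trm = V nat | Mn | Mx

text \<open>One syntax covering both logics.  Q k Xs psis is the quantifier Q*_L applied to the
  distinct k-ary relation variables Xs and formulas psis = psi_1 ... psi_(s-1).\<close>
datatype 'a form =
    Eq trm trm | Less trm trm | Plus trm trm trm | Times trm trm trm
  | Letter 'a trm | Rel nat "trm list"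
  | Neg "'a form" | Conj "'a form" "'a form" | Ex nat "'a form"
  | Q nat "nat list" "'a form list"

fun teval :: "nat \<Rightarrow> (nat \<Rightarrow> nat) \<Rightarrow> trm \<Rightarrow> nat" where
  "teval n \<nu> (V x) = \<nu> x"
| "teval n \<nu> Mn = 0"
| "teval n \<nu> Mx = n - 1"

definition tuples :: "nat \<Rightarrow> nat \<Rightarrow> nat list list" where
  "tuples n k = sorted_list_of_set {xs. length xs = k \<and> set xs \<subseteq> {..<n}}"

text \<open>All bit strings of length m in lexicographic order (False = 0 < True = 1).\<close>
definition codes :: "nat \<Rightarrow> bool list list" where
  "codes m = sorted_list_of_set {c :: bool list. length c = m}"

text \<open>The assignment (A_1,...,A_t) whose concatenated code is c.\<close>
definition decode :: "nat \<Rightarrow> nat \<Rightarrow> nat \<Rightarrow> bool list \<Rightarrow> nat list set list" where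
  "decode n k t c = map (\<lambda>i. {tuples n k ! j | j. j < n ^ k \<and> c ! (i * n ^ k + j)}) [0..<t]"

fun upd :: "(nat \<Rightarrow> nat list set) \<Rightarrow> nat list \<Rightarrow> nat list set list \<Rightarrow> (nat \<Rightarrow> nat list set)" where
  "upd \<rho> (x # xs) (A # As) = (upd \<rho> xs As)(x := A)"
| "upd \<rho> _ _ = \<rho>"

definition choose_letter :: "'b list \<Rightarrow> bool list \<Rightarrow> 'b" where
  "choose_letter bs vs =
     (if \<exists>j < length vs. vs ! j then bs ! (LEAST j. j < length vs \<and> vs ! j) else last bs)"

text \<open>Satisfaction on the string w (universe {0..length w - 1}); bs is the ordered
  alphabet (a_1,...,a_s) of L.\<close>
fun sat :: "'b list \<Rightarrow> 'b list set \<Rightarrow> 'a list \<Rightarrow> (nat \<Rightarrow> nat) \<Rightarrow> (nat \<Rightarrow> nat list set)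
             \<Rightarrow> 'a form \<Rightarrow> bool" where
  "sat bs L w \<nu> \<rho> (Eq s t) = (teval (length w) \<nu> s = teval (length w) \<nu> t)"
| "sat bs L w \<nu> \<rho> (Less s t) = (teval (length w) \<nu> s < teval (length w) \<nu> t)"
| "sat bs L w \<nu> \<rho> (Plus a b c) =
     (teval (length w) \<nu> a + teval (length w) \<nu> b = teval (length w) \<nu> c)"
| "sat bs L w \<nu> \<rho> (Times a b c) =
     (teval (length w) \<nu> a * teval (length w) \<nu> b = teval (length w) \<nu> c)"
| "sat bs L w \<nu> \<rho> (Letter a t) = (w ! teval (length w) \<nu> t = a)"
| "sat bs L w \<nu> \<rho> (Rel r ts) = (map (teval (length w) \<nu>) ts \<in> \<rho> r)"
| "sat bs L w \<nu> \<rho> (Neg \<phi>) = (\<not> sat bs L w \<nu> \<rho> \<phi>)"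
| "sat bs L w \<nu> \<rho> (Conj \<phi> \<psi>) = (sat bs L w \<nu> \<rho> \<phi> \<and> sat bs L w \<nu> \<rho> \<psi>)"
| "sat bs L w \<nu> \<rho> (Ex x \<phi>) = (\<exists>i < length w. sat bs L w (\<nu>(x := i)) \<rho> \<phi>)"
| "sat bs L w \<nu> \<rho> (Q k Xs \<psi>s) =
     (map (\<lambda>c. choose_letter bs
              (map (\<lambda>\<psi>. sat bs L w \<nu> (upd \<rho> Xs (decode (length w) k (length Xs) c)) \<psi>) \<psi>s))
          (codes (length Xs * length w ^ k)) \<in> L)"

fun tvars :: "trm \<Rightarrow> nat set" where
  "tvars (V x) = {x}" | "tvars Mn = {}" | "tvars Mx = {}"

fun fv :: "'a form \<Rightarrow> nat set" where
  "fv (Eq s t) = tvars s \<union> tvars t"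
| "fv (Less s t) = tvars s \<union> tvars t"
| "fv (Plus a b c) = tvars a \<union> tvars b \<union> tvars c"
| "fv (Times a b c) = tvars a \<union> tvars b \<union> tvars c"
| "fv (Letter a t) = tvars t"
| "fv (Rel r ts) = (\<Union>t \<in> set ts. tvars t)"
| "fv (Neg \<phi>) = fv \<phi>"
| "fv (Conj \<phi> \<psi>) = fv \<phi> \<union> fv \<psi>"
| "fv (Ex x \<phi>) = fv \<phi> - {x}"
| "fv (Q k Xs \<psi>s) = (\<Union>\<psi> \<in> set \<psi>s. fv \<psi>)"

fun frv :: "'a form \<Rightarrow> nat set" where
  "frv (Rel r ts) = {r}"
| "frv (Neg \<phi>) = frv \<phi>"
| "frv (Conj \<phi> \<psi>) = frv \<phi> \<union> frv \<psi>"
| "frv (Ex x \<phi>) = frv \<phi>"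
| "frv (Q k Xs \<psi>s) = (\<Union>\<psi> \<in> set \<psi>s. frv \<psi>) - set Xs"
| "frv _ = {}"

fun pureFO :: "'a set \<Rightarrow> nat \<Rightarrow> 'a form \<Rightarrow> bool" where
  "pureFO Sig k (Eq s t) = True"
| "pureFO Sig k (Less s t) = True"
| "pureFO Sig k (Plus a b c) = False"
| "pureFO Sig k (Times a b c) = False"
| "pureFO Sig k (Letter a t) = (a \<in> Sig)"
| "pureFO Sig k (Rel r ts) = (length ts = k)"
| "pureFO Sig k (Neg \<phi>) = pureFO Sig k \<phi>"
| "pureFO Sig k (Conj \<phi> \<psi>) = (pureFO Sig k \<phi> \<and> pureFO Sig k \<psi>)"
| "pureFO Sig k (Ex x \<phi>) = pureFO Sig k \<phi>"
| "pureFO Sig k (Q m Xs \<psi>s) = False"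

fun wf_FOQ :: "'a set \<Rightarrow> nat \<Rightarrow> 'a form \<Rightarrow> bool" where
  "wf_FOQ Sig s (Letter a t) = (a \<in> Sig)"
| "wf_FOQ Sig s (Rel r ts) = (length ts = 1)"
| "wf_FOQ Sig s (Neg \<phi>) = wf_FOQ Sig s \<phi>"
| "wf_FOQ Sig s (Conj \<phi> \<psi>) = (wf_FOQ Sig s \<phi> \<and> wf_FOQ Sig s \<psi>)"
| "wf_FOQ Sig s (Ex x \<phi>) = wf_FOQ Sig s \<phi>"
| "wf_FOQ Sig s (Q m Xs \<psi>s) =
     (m = 1 \<and> Xs \<noteq> [] \<and> distinct Xs \<and> length \<psi>s = s - 1 \<and> (\<forall>\<psi> \<in> set \<psi>s. wf_FOQ Sig s \<psi>))"
| "wf_FOQ Sig s _ = True"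

definition FOQ_sentence :: "'a set \<Rightarrow> nat \<Rightarrow> 'a form \<Rightarrow> bool" where
  "FOQ_sentence Sig s \<phi> \<longleftrightarrow> wf_FOQ Sig s \<phi> \<and> fv \<phi> = {} \<and> frv \<phi> = {}"

definition QLFO_sentence :: "'a set \<Rightarrow> nat \<Rightarrow> nat \<Rightarrow> 'a form \<Rightarrow> bool" where
  "QLFO_sentence Sig s k \<phi> \<longleftrightarrow>
     (\<exists>Xs \<psi>s. \<phi> = Q k Xs \<psi>s \<and> Xs \<noteq> [] \<and> distinct Xs \<and> length \<psi>s = s - 1 \<and>
        (\<forall>\<psi> \<in> set \<psi>s. pureFO Sig k \<psi> \<and> fv \<psi> = {} \<and> frv \<psi> \<subseteq> set Xs))"

definition defines_lang :: "'b list \<Rightarrow> 'b list set \<Rightarrow> 'a set \<Rightarrow> 'a form \<Rightarrow> 'a list set \<Rightarrow> bool" where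
  "defines_lang bs L Sig \<phi> A \<longleftrightarrow>
     A = {w. w \<noteq> [] \<and> set w \<subseteq> Sig \<and> sat bs L w (\<lambda>_. 0) (\<lambda>_. {}) \<phi>}"

end

theory Submission
  imports Defs
begin

fun dig :: "nat \<Rightarrow> nat \<Rightarrow> nat \<Rightarrow> nat list" where
  "dig n 0 j = []"
| "dig n (Suc k) j = j div n ^ k # dig n k (j mod n ^ k)"

fun hor :: "nat \<Rightarrow> nat \<Rightarrow> nat list \<Rightarrow> nat" where
  "hor n a [] = a"
| "hor n a (x # xs) = hor n (a * n + x) xs"

lemma length_dig[simp]: "length (dig n k j) = k"
  by (induction k arbitrary: j) auto

lemma hor_dig: "0 < n \<Longrightarrow> j < n ^ k \<Longrightarrow> hor n a (dig n k j) = a * n ^ k + j"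
proof (induction k arbitrary: a j)
  case 0 then show ?case by simp
next
  case (Suc k)
  have "hor n a (dig n (Suc k) j) = (a * n + j div n ^ k) * n ^ k + j mod n ^ k"
    using Suc by simp
  also have "\<dots> = a * n ^ Suc k + j"
    by (simp add: algebra_simps)
  finally show ?case .
qed

lemma dig_set: "0 < n \<Longrightarrow> j < n ^ k \<Longrightarrow> set (dig n k j) \<subseteq> {..<n}"
proof (induction k arbitrary: j)
  case 0 then show ?case by simp
next
  case (Suc k)
  have "j div n ^ k < n" using Suc.prems
    by (simp add: less_mult_imp_div_less mult.commute)
  then show ?case using Suc by simp
qed

lemma dig_mono: "0 < n \<Longrightarrow> i < j \<Longrightarrow> j < n ^ k \<Longrightarrow> dig n k i < dig n k j"
proof (induction k arbitrary: i j)
  case 0 then show ?case by simp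
next
  case (Suc k)
  have le: "i div n ^ k \<le> j div n ^ k" using Suc.prems by (simp add: div_le_mono)
  show ?case
  proof (cases "i div n ^ k = j div n ^ k")
    case True
    then have "i mod n ^ k < j mod n ^ k" using Suc.prems
      by (metis div_mult_mod_eq nat_add_left_cancel_less)
    then show ?thesis using Suc True by simp
  next
    case False then show ?thesis using le by simp
  qed
qed

lemma dig_inj: "0 < n \<Longrightarrow> inj_on (dig n k) {..<n ^ k}"
  by (metis hor_dig inj_onI lessThan_iff mult_0 add_0)

lemma dig_image: "0 < n \<Longrightarrow> dig n k ` {..<n ^ k} = {xs. length xs = k \<and> set xs \<subseteq> {..<n}}"
proof -
  assume n: "0 < n"
  let ?S = "{xs. length xs = k \<and> set xs \<subseteq> {..<n}}"
  have sub: "dig n k ` {..<n ^ k} \<subseteq> ?S" using dig_set n by auto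
  have fin: "finite ?S" using finite_lists_length_eq[of "{..<n}" k] by (simp add: conj_commute)
  have "card ?S = n ^ k" using card_lists_length_eq[of "{..<n}" k] by (simp add: conj_commute)
  moreover have "card (dig n k ` {..<n ^ k}) = n ^ k"
    using card_image[OF dig_inj[OF n]] by simp
  ultimately show ?thesis using card_subset_eq[OF fin sub] by simp
qed

lemma tuples_eq: "0 < n \<Longrightarrow> tuples n k = map (dig n k) [0..<n ^ k]"
proof -
  assume n: "0 < n"
  let ?S = "{xs. length xs = k \<and> set xs \<subseteq> {..<n}}"
  have fin: "finite ?S" using finite_lists_length_eq[of "{..<n}" k] by (simp add: conj_commute)
  have "sorted_wrt (<) (map (dig n k) [0..<n ^ k])"
    by (auto simp: sorted_wrt_map sorted_wrt_iff_nth_less intro: dig_mono[OF n])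
  moreover have "set (map (dig n k) [0..<n ^ k]) = ?S"
    using dig_image[OF n] by (simp add: atLeast0LessThan)
  moreover have "card ?S = n ^ k" using card_lists_length_eq[of "{..<n}" k] by (simp add: conj_commute)
  ultimately show ?thesis unfolding tuples_def
    using sorted_list_of_set_unique[OF fin, of "map (dig n k) [0..<n ^ k]"]
    by (simp add: atLeast0LessThan)
qed

lemma dig_hor: "0 < n \<Longrightarrow> length v = k \<Longrightarrow> set v \<subseteq> {..<n} \<Longrightarrow>
   hor n 0 v < n ^ k \<and> dig n k (hor n 0 v) = v"
proof -
  assume n: "0 < n" and "length v = k" "set v \<subseteq> {..<n}"
  then have "v \<in> dig n k ` {..<n ^ k}" using dig_image[OF n] by auto
  then obtain j where "j < n ^ k" "v = dig n k j" by auto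
  then show ?thesis using hor_dig[OF n] by simp
qed

lemma hor_ge: "0 < n \<Longrightarrow> a \<le> hor n a xs"
proof (induction xs arbitrary: a)
  case Nil then show ?case by simp
next
  case (Cons x xs)
  have "a \<le> a * n + x" if "n > 0"
  proof -
    have "a * 1 \<le> a * n" using that by (intro mult_le_mono2) simp
    then show ?thesis by (metis mult.right_neutral trans_le_add1)
  qed
  then show ?case using Cons.IH[of "a * n + x"] Cons.prems by (auto intro: order_trans)
qed

lemma hor_rep: "0 < n \<Longrightarrow> hor n a (replicate k (n - 1)) = (a + 1) * n ^ k - 1"
proof (induction k arbitrary: a)
  case 0 then show ?case by simp
next
  case (Suc k)
  have e: "a * n + (n - 1) = (a + 1) * n - 1" using Suc.prems by (simp add: algebra_simps)
  have p: "(a + 1) * n \<ge> 1" using Suc.prems by simp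
  have "hor n a (replicate (Suc k) (n - 1)) = hor n ((a + 1) * n - 1) (replicate k (n - 1))"
    using e by simp
  also have "\<dots> = ((a + 1) * n - 1 + 1) * n ^ k - 1" using Suc.IH Suc.prems by blast
  also have "\<dots> = (a + 1) * n ^ Suc k - 1" by (subst diff_add[OF p]) (simp add: algebra_simps)
  finally show ?case .
qed

fun trt :: "nat \<Rightarrow> trm \<Rightarrow> trm" where
  "trt c (V x) = V (x + c)" | "trt c Mn = Mn" | "trt c Mx = V 0"

definition lin :: "nat \<Rightarrow> trm \<Rightarrow> trm \<Rightarrow> trm \<Rightarrow> 'a form" where
  "lin d a b z = Ex (d+1) (Ex (d+2) (Conj (Times a (V 0) (V (d+1)))
      (Conj (Plus (V (d+1)) a (V (d+2))) (Plus (V (d+2)) b z))))"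

fun chain :: "nat \<Rightarrow> trm \<Rightarrow> trm list \<Rightarrow> (trm \<Rightarrow> 'a form) \<Rightarrow> 'a form" where
  "chain d acc [] cont = cont acc"
| "chain d acc (t # ts) cont = Ex d (Conj (lin d acc t (V d)) (chain (d+3) (V d) ts cont))"

lemma teval_cong: "(\<And>x. x \<in> tvars t \<Longrightarrow> \<nu> x = \<nu>' x) \<Longrightarrow> teval n \<nu> t = teval n \<nu>' t"
  by (cases t) auto

lemma sat_lin:
  assumes "d + 1 \<notin> tvars a" "d + 2 \<notin> tvars a" "d + 1 \<notin> tvars b" "d + 2 \<notin> tvars b"
    "d + 1 \<notin> tvars z" "d + 2 \<notin> tvars z" "0 < d"
    "teval (length w) \<nu> z < length w"
  shows "sat bs L w \<nu> \<rho> (lin d a b z) \<longleftrightarrow>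
     teval (length w) \<nu> z = teval (length w) \<nu> a * (\<nu> 0 + 1) + teval (length w) \<nu> b"
proof -
  let ?N = "length w"
  let ?a = "teval ?N \<nu> a" and ?b = "teval ?N \<nu> b" and ?z = "teval ?N \<nu> z"
  have ea: "teval ?N (\<nu>(d+1 := q, d+2 := r)) a = ?a" for q r
    using assms by (intro teval_cong) auto
  have eb: "teval ?N (\<nu>(d+1 := q, d+2 := r)) b = ?b" for q r
    using assms by (intro teval_cong) auto
  have ez: "teval ?N (\<nu>(d+1 := q, d+2 := r)) z = ?z" for q r
    using assms by (intro teval_cong) auto
  have "sat bs L w \<nu> \<rho> (lin d a b z) \<longleftrightarrow>
     (\<exists>q < ?N. \<exists>r < ?N. ?a * \<nu> 0 = q \<and> q + ?a = r \<and> r + ?b = ?z)"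
    using assms ea eb ez by (simp add: lin_def)
  also have "\<dots> \<longleftrightarrow> ?z = ?a * (\<nu> 0 + 1) + ?b"
    using assms(8) by (auto simp: algebra_simps)
  finally show ?thesis .
qed

lemma sat_chain:
  assumes "\<forall>t \<in> insert acc (set ts). \<forall>x \<in> tvars t. x < d \<or> x \<ge> d + 3 * length ts"
    "0 < d"
    "\<And>t \<nu>'. sat bs L w \<nu>' \<rho> (cont t) = P (teval (length w) \<nu>' t)"
    "P (hor (\<nu> 0 + 1) (teval (length w) \<nu> acc) (map (teval (length w) \<nu>) ts))
      \<Longrightarrow> hor (\<nu> 0 + 1) (teval (length w) \<nu> acc) (map (teval (length w) \<nu>) ts) < length w"
  shows "sat bs L w \<nu> \<rho> (chain d acc ts cont) \<longleftrightarrow>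
     P (hor (\<nu> 0 + 1) (teval (length w) \<nu> acc) (map (teval (length w) \<nu>) ts))"
  using assms
proof (induction ts arbitrary: d acc \<nu>)
  case Nil then show ?case by simp
next
  case (Cons t ts)
  let ?N = "length w"
  let ?a = "teval ?N \<nu> acc" and ?b = "teval ?N \<nu> t"
  have e0: "(\<nu>(d := i)) 0 = \<nu> 0" for i using Cons.prems by simp
  have ea: "teval ?N (\<nu>(d := i)) acc = ?a" for i
    using Cons.prems(1) by (intro teval_cong) auto
  have eb: "teval ?N (\<nu>(d := i)) t = ?b" for i
    using Cons.prems(1) by (intro teval_cong) auto
  have nd: "\<forall>t' \<in> set ts. d \<notin> tvars t'" using Cons.prems(1) by fastforce
  have ets: "map (teval ?N (\<nu>(d := i))) ts = map (teval ?N \<nu>) ts" for i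
    using nd by (intro list.map_cong0 teval_cong) auto
  have lin_iff: "sat bs L w (\<nu>(d := i)) \<rho> (lin d acc t (V d)) \<longleftrightarrow> i = ?a * (\<nu> 0 + 1) + ?b"
    if "i < ?N" for i
  proof -
    have "sat bs L w (\<nu>(d := i)) \<rho> (lin d acc t (V d)) \<longleftrightarrow>
      teval ?N (\<nu>(d := i)) (V d) = teval ?N (\<nu>(d := i)) acc * ((\<nu>(d := i)) 0 + 1)
          + teval ?N (\<nu>(d := i)) t"
      using Cons.prems(1,2) that by (intro sat_lin) auto
    then show ?thesis using ea eb e0 by simp
  qed
  have IH: "sat bs L w (\<nu>(d := i)) \<rho> (chain (d + 3) (V d) ts cont) \<longleftrightarrow>
      P (hor (\<nu> 0 + 1) i (map (teval ?N \<nu>) ts))" if "i = ?a * (\<nu> 0 + 1) + ?b" for i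
  proof -
    have "sat bs L w (\<nu>(d := i)) \<rho> (chain (d + 3) (V d) ts cont) \<longleftrightarrow>
      P (hor ((\<nu>(d := i)) 0 + 1) (teval ?N (\<nu>(d := i)) (V d)) (map (teval ?N (\<nu>(d := i))) ts))"
    proof (rule Cons.IH)
      show "\<forall>t\<in>insert (V d) (set ts). \<forall>x\<in>tvars t. x < d + 3 \<or> d + 3 + 3 * length ts \<le> x"
        using Cons.prems(1) by fastforce
      show "P (hor ((\<nu>(d := i)) 0 + 1) (teval ?N (\<nu>(d := i)) (V d)) (map (teval ?N (\<nu>(d := i))) ts))
        \<Longrightarrow> hor ((\<nu>(d := i)) 0 + 1) (teval ?N (\<nu>(d := i)) (V d)) (map (teval ?N (\<nu>(d := i))) ts) < ?N"
        using Cons.prems(2,4) that by (simp add: e0 ets)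
    qed (use Cons.prems in auto)
    then show ?thesis using e0 ets by simp
  qed
  show ?case
  proof
    assume "sat bs L w \<nu> \<rho> (chain d acc (t # ts) cont)"
    then obtain i where "i < ?N" "sat bs L w (\<nu>(d := i)) \<rho> (lin d acc t (V d))"
      "sat bs L w (\<nu>(d := i)) \<rho> (chain (d + 3) (V d) ts cont)" by auto
    then show "P (hor (\<nu> 0 + 1) ?a (map (teval ?N \<nu>) (t # ts)))"
      using lin_iff IH by simp
  next
    assume P: "P (hor (\<nu> 0 + 1) ?a (map (teval ?N \<nu>) (t # ts)))"
    let ?i = "?a * (\<nu> 0 + 1) + ?b"
    have "?i \<le> hor (\<nu> 0 + 1) ?a (map (teval ?N \<nu>) (t # ts))"
      using hor_ge[of "\<nu> 0 + 1"] by simp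
    then have "?i < ?N" using Cons.prems(4) P by simp
    then show "sat bs L w \<nu> \<rho> (chain d acc (t # ts) cont)"
      using lin_iff[of ?i] IH[of ?i] P by auto
  qed
qed

fun tr :: "nat \<Rightarrow> 'a form \<Rightarrow> 'a form" where
  "tr c (Eq s t) = Eq (trt c s) (trt c t)"
| "tr c (Less s t) = Less (trt c s) (trt c t)"
| "tr c (Letter a t) = Letter a (trt c t)"
| "tr c (Rel r ts) = chain 1 Mn (map (trt c) ts) (\<lambda>z. Rel r [z])"
| "tr c (Neg \<phi>) = Neg (tr c \<phi>)"
| "tr c (Conj \<phi> \<psi>) = Conj (tr c \<phi>) (tr c \<psi>)"
| "tr c (Ex x \<phi>) = Ex (x + c) (Conj (Neg (Less (V 0) (V (x + c)))) (tr c \<phi>))"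
| "tr c _ = Eq Mn Mn"

lemma teval_trt:
  assumes "\<forall>x. \<nu>' (x + c) = \<nu> x" "\<nu>' 0 = n - 1"
  shows "teval N \<nu>' (trt c t) = teval n \<nu> t"
  using assms by (cases t) auto

lemma teval_lt: "0 < n \<Longrightarrow> \<forall>x \<in> tvars t. \<nu> x < n \<Longrightarrow> teval n \<nu> t < n"
  by (cases t) auto

lemma tvars_trt: "x \<in> tvars (trt c t) \<Longrightarrow> x = 0 \<or> x \<ge> c"
  by (cases t) auto

lemma sat_tr:
  assumes "pureFO Sig k \<psi>" "w' = w @ ys" "0 < length w" "length w ^ k \<le> length w'"
    "c = 3 * k + 1"
    "\<forall>x. \<nu>' (x + c) = \<nu> x" "\<nu>' 0 = length w - 1" "\<forall>x \<in> fv \<psi>. \<nu> x < length w"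
    "\<forall>r v. length v = k \<and> set v \<subseteq> {..<length w} \<longrightarrow> (v \<in> \<rho> r \<longleftrightarrow> [hor (length w) 0 v] \<in> \<rho>' r)"
  shows "sat bs L w' \<nu>' \<rho>' (tr c \<psi>) = sat bs L w \<nu> \<rho> \<psi>"
  using assms
proof (induction \<psi> arbitrary: \<nu> \<nu>')
  case (Eq s t)
  then show ?case using teval_trt[of \<nu>' c \<nu> "length w"] by simp
next
  case (Less s t)
  then show ?case using teval_trt[of \<nu>' c \<nu> "length w"] by simp
next
  case (Letter a t)
  have lt: "teval (length w) \<nu> t < length w" using Letter by (intro teval_lt) auto
  then show ?case using Letter teval_trt[of \<nu>' c \<nu> "length w"] by (simp add: nth_append)
next
  case (Rel r ts)
  let ?n = "length w" and ?N = "length w'"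
  let ?v = "map (teval ?n \<nu>) ts"
  have lk: "length ts = k" using Rel by simp
  have vset: "set ?v \<subseteq> {..<?n}" using Rel teval_lt[of ?n] by auto
  have hv: "hor ?n 0 ?v < ?n ^ k" using dig_hor[of ?n ?v k] vset lk Rel by simp
  have vals: "map (teval ?N \<nu>') (map (trt c) ts) = ?v"
    using teval_trt[of \<nu>' c \<nu> ?n ?N] Rel by simp
  have n1: "\<nu>' 0 + 1 = ?n" using Rel by simp
  have "sat bs L w' \<nu>' \<rho>' (tr c (Rel r ts)) \<longleftrightarrow>
    [hor (\<nu>' 0 + 1) (teval ?N \<nu>' Mn) (map (teval ?N \<nu>') (map (trt c) ts))] \<in> \<rho>' r"
  proof (unfold tr.simps, rule sat_chain)
    show "\<forall>t\<in>insert Mn (set (map (trt c) ts)). \<forall>x\<in>tvars t. x < 1 \<or> 1 + 3 * length (map (trt c) ts) \<le> x"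
      using lk Rel.prems(5) tvars_trt by fastforce
    have "hor (\<nu>' 0 + 1) (teval ?N \<nu>' Mn) (map (teval ?N \<nu>') (map (trt c) ts)) < ?n ^ k"
      using hv by (simp only: n1 vals teval.simps)
    then show "[hor (\<nu>' 0 + 1) (teval ?N \<nu>' Mn) (map (teval ?N \<nu>') (map (trt c) ts))] \<in> \<rho>' r \<Longrightarrow>
      hor (\<nu>' 0 + 1) (teval ?N \<nu>' Mn) (map (teval ?N \<nu>') (map (trt c) ts)) < ?N"
      using Rel.prems(4) by linarith
  qed auto
  also have "\<dots> \<longleftrightarrow> [hor ?n 0 ?v] \<in> \<rho>' r" by (simp only: n1 vals teval.simps)
  also have "\<dots> \<longleftrightarrow> ?v \<in> \<rho> r" using Rel.prems(9) lk vset by simp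
  finally show ?case by simp
next
  case (Neg \<phi>)
  then show ?case by simp
next
  case (Conj \<phi> \<chi>)
  have "sat bs L w' \<nu>' \<rho>' (tr c \<phi>) = sat bs L w \<nu> \<rho> \<phi>"
    by (rule Conj.IH(1)) (use Conj.prems in auto)
  moreover have "sat bs L w' \<nu>' \<rho>' (tr c \<chi>) = sat bs L w \<nu> \<rho> \<chi>"
    by (rule Conj.IH(2)) (use Conj.prems in auto)
  ultimately show ?case by simp
next
  case (Ex x \<phi>)
  let ?n = "length w" and ?N = "length w'"
  have nN: "?n \<le> ?N" using Ex.prems(2) by simp
  have c0: "x + c \<noteq> 0" using Ex.prems(5) by simp
  have step: "sat bs L w' (\<nu>'(x + c := i)) \<rho>' (tr c \<phi>) = sat bs L w (\<nu>(x := i)) \<rho> \<phi>"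
    if "i < ?n" for i
  proof (rule Ex.IH)
    show "\<forall>y. (\<nu>'(x + c := i)) (y + c) = (\<nu>(x := i)) y" using Ex.prems(6) by auto
    show "(\<nu>'(x + c := i)) 0 = ?n - 1" using c0 Ex.prems(7) by auto
    show "\<forall>y\<in>fv \<phi>. (\<nu>(x := i)) y < ?n" using that Ex.prems(8) by auto
  qed (use Ex.prems in auto)
  have "sat bs L w' \<nu>' \<rho>' (tr c (Ex x \<phi>)) \<longleftrightarrow>
     (\<exists>i < ?N. i < ?n \<and> sat bs L w' (\<nu>'(x + c := i)) \<rho>' (tr c \<phi>))"
  proof -
    have "sat bs L w' \<nu>' \<rho>' (tr c (Ex x \<phi>)) \<longleftrightarrow>
     (\<exists>i < ?N. \<not> ?n - 1 < i \<and> sat bs L w' (\<nu>'(x + c := i)) \<rho>' (tr c \<phi>))"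
      using Ex.prems(5,7) by simp
    moreover have "(\<not> ?n - 1 < i) = (i < ?n)" for i using Ex.prems(3) by linarith
    ultimately show ?thesis by simp
  qed
  also have "\<dots> \<longleftrightarrow> (\<exists>i < ?n. sat bs L w (\<nu>(x := i)) \<rho> \<phi>)"
    using step nN by (meson less_le_trans)
  finally show ?case by simp
qed auto

lemma fv_chain: "(\<And>t. fv (cont t) \<subseteq> tvars t) \<Longrightarrow>
  fv (chain d acc ts cont) \<subseteq> tvars acc \<union> (\<Union>t\<in>set ts. tvars t) \<union> {0}"
proof (induction ts arbitrary: d acc)
  case Nil then show ?case by fastforce
next
  case (Cons t ts)
  have "fv (chain (d + 3) (V d) ts cont) \<subseteq> {d} \<union> (\<Union>t\<in>set ts. tvars t) \<union> {0}"
    using Cons.IH[of "d + 3" "V d"] Cons.prems by simp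
  then show ?case by (auto simp: lin_def)
qed

lemma frv_chain: "(\<And>t. frv (cont t) \<subseteq> R) \<Longrightarrow> frv (chain d acc ts cont) \<subseteq> R"
  by (induction ts arbitrary: d acc) (auto simp: lin_def)

lemma wf_chain: "(\<And>t. wf_FOQ S s (cont t)) \<Longrightarrow> wf_FOQ S s (chain d acc ts cont)"
  by (induction ts arbitrary: d acc) (auto simp: lin_def)

lemma tvars_trt2: "tvars (trt c t) \<subseteq> insert 0 ((\<lambda>x. x + c) ` tvars t)"
  by (cases t) auto

lemma fv_tr: "fv (tr c \<psi>) \<subseteq> insert 0 ((\<lambda>x. x + c) ` fv \<psi>)"
proof (induction \<psi>)
  case (Rel r ts)
  have "fv (tr c (Rel r ts)) \<subseteq> tvars Mn \<union> (\<Union>t\<in>set (map (trt c) ts). tvars t) \<union> {0}"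
    unfolding tr.simps by (rule fv_chain) simp
  then show ?case using tvars_trt2[of c] by fastforce
next
  case (Ex x \<phi>)
  then show ?case by auto
qed (use tvars_trt2[of c] in auto)

lemma frv_tr: "frv (tr c \<psi>) \<subseteq> frv \<psi>"
proof (induction \<psi>)
  case (Rel r ts)
  then show ?case unfolding tr.simps by (intro frv_chain) simp
qed auto

lemma wf_tr: "pureFO Sig k \<psi> \<Longrightarrow> Sig \<subseteq> S \<Longrightarrow> wf_FOQ S s (tr c \<psi>)"
proof (induction \<psi>)
  case (Rel r ts)
  then show ?case unfolding tr.simps by (intro wf_chain) simp
qed auto

definition relR :: "nat \<Rightarrow> nat \<Rightarrow> nat list set \<Rightarrow> nat list set \<Rightarrow> bool" where
  "relR n k A A' \<longleftrightarrow> (\<forall>v. length v = k \<and> set v \<subseteq> {..<n} \<longrightarrow> (v \<in> A \<longleftrightarrow> [hor n 0 v] \<in> A'))"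

lemma upd_rel: "\<forall>r. relR n k (\<rho> r) (\<rho>' r) \<Longrightarrow> list_all2 (relR n k) As As' \<Longrightarrow>
   \<forall>r. relR n k (upd \<rho> Xs As r) (upd \<rho>' Xs As' r)"
proof (induction Xs arbitrary: As As')
  case Nil then show ?case by simp
next
  case (Cons x Xs)
  show ?case
  proof (cases As)
    case Nil then show ?thesis using Cons by simp
  next
    case (Cons A As1)
    then obtain A' As1' where "As' = A' # As1'" "relR n k A A'" "list_all2 (relR n k) As1 As1'"
      using \<open>list_all2 (relR n k) As As'\<close> by (auto simp: list_all2_Cons1)
    then show ?thesis using Cons.IH[of As1 As1'] Cons.prems \<open>As = A # As1\<close> by simp
  qed
qed

lemma tuples1: "0 < N \<Longrightarrow> j < N \<Longrightarrow> tuples N 1 ! j = [j]"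
  by (simp add: tuples_eq)

lemma tuplesk: "0 < n \<Longrightarrow> j < n ^ k \<Longrightarrow> tuples n k ! j = dig n k j"
  by (simp add: tuples_eq)

lemma decode_rel:
  assumes "0 < n" "N = n ^ k"
  shows "list_all2 (relR n k) (decode n k t cd) (decode N 1 t cd)"
proof -
  have N: "0 < N" using assms by simp
  have "relR n k {tuples n k ! j |j. j < n ^ k \<and> cd ! (i * n ^ k + j)}
                 {tuples N 1 ! j |j. j < N ^ 1 \<and> cd ! (i * N ^ 1 + j)}" for i
    unfolding relR_def
  proof (intro allI impI)
    fix v :: "nat list" assume v: "length v = k \<and> set v \<subseteq> {..<n}"
    then have h: "hor n 0 v < n ^ k" "dig n k (hor n 0 v) = v" using dig_hor[OF assms(1)] by auto
    show "v \<in> {tuples n k ! j |j. j < n ^ k \<and> cd ! (i * n ^ k + j)} \<longleftrightarrow>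
          [hor n 0 v] \<in> {tuples N 1 ! j |j. j < N ^ 1 \<and> cd ! (i * N ^ 1 + j)}"
    proof
      assume "v \<in> {tuples n k ! j |j. j < n ^ k \<and> cd ! (i * n ^ k + j)}"
      then obtain j where j: "j < n ^ k" "cd ! (i * n ^ k + j)" "v = dig n k j"
        using tuplesk[OF assms(1)] by auto
      then have "hor n 0 v = j" using hor_dig[OF assms(1)] by simp
      then show "[hor n 0 v] \<in> {tuples N 1 ! j |j. j < N ^ 1 \<and> cd ! (i * N ^ 1 + j)}"
        using j assms tuples1[OF N] by (auto intro!: exI[of _ j])
    next
      assume "[hor n 0 v] \<in> {tuples N 1 ! j |j. j < N ^ 1 \<and> cd ! (i * N ^ 1 + j)}"
      then obtain j where j: "j < N" "cd ! (i * N + j)" "[hor n 0 v] = [j]"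
        using tuples1[OF N] by auto
      then show "v \<in> {tuples n k ! j |j. j < n ^ k \<and> cd ! (i * n ^ k + j)}"
        using h assms tuplesk[OF assms(1)] by (auto intro!: exI[of _ j])
    qed
  qed
  then show ?thesis unfolding decode_def by (auto simp: list_all2_conv_all_nth)
qed

lemma sat_Q:
  assumes "\<forall>\<psi> \<in> set \<psi>s. pureFO Sig k \<psi> \<and> fv \<psi> = {}" "w \<noteq> []" "k \<ge> 1"
    "w' = w @ replicate (length w ^ k - length w) sharp" "c = 3 * k + 1"
    "\<nu>a 0 = length w - 1" "\<forall>x. \<nu>a (x + c) = 0"
  shows "sat bs L w' \<nu>a (\<lambda>_. {}) (Q 1 Xs (map (tr c) \<psi>s)) \<longleftrightarrow>
         sat bs L w (\<lambda>_. 0) (\<lambda>_. {}) (Q k Xs \<psi>s)"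
proof -
  let ?n = "length w"
  have n: "0 < ?n" using assms(2) by simp
  have le: "?n \<le> ?n ^ k" using n assms(3) by (intro self_le_power) linarith+
  have N: "length w' = ?n ^ k" using assms(4) le by simp
  have eq: "map (\<lambda>\<psi>. sat bs L w' \<nu>a (upd (\<lambda>_. {}) Xs (decode (length w') 1 (length Xs) cd)) \<psi>)
              (map (tr c) \<psi>s) =
            map (\<lambda>\<psi>. sat bs L w (\<lambda>_. 0) (upd (\<lambda>_. {}) Xs (decode ?n k (length Xs) cd)) \<psi>) \<psi>s"
    for cd
  proof -
    have R: "\<forall>r. relR ?n k (upd (\<lambda>_. {}) Xs (decode ?n k (length Xs) cd) r)
                 (upd (\<lambda>_. {}) Xs (decode (length w') 1 (length Xs) cd) r)"
    proof (rule upd_rel)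
      show "list_all2 (relR ?n k) (decode ?n k (length Xs) cd) (decode (length w') 1 (length Xs) cd)"
        using decode_rel[OF n N, of "length Xs" cd] .
    qed (auto simp: relR_def)
    show ?thesis unfolding map_map o_def
    proof (rule list.map_cong0)
      fix \<psi> assume "\<psi> \<in> set \<psi>s"
      then show "sat bs L w' \<nu>a (upd (\<lambda>_. {}) Xs (decode (length w') 1 (length Xs) cd)) (tr c \<psi>) =
         sat bs L w (\<lambda>_. 0) (upd (\<lambda>_. {}) Xs (decode ?n k (length Xs) cd)) \<psi>"
        using assms R le by (intro sat_tr[where Sig=Sig and k=k and ys="replicate (?n ^ k - ?n) sharp"])
          (auto simp: relR_def)
    qed
  qed
  show ?thesis using eq N by (simp del: map_map)
qed

definition shape :: "nat \<Rightarrow> 'a \<Rightarrow> 'a form" where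
  "shape k sharp = Conj (Neg (Ex 1 (Conj (Neg (Less (V 0) (V 1))) (Letter sharp (V 1)))))
     (Conj (Neg (Ex 1 (Conj (Less (V 0) (V 1)) (Neg (Letter sharp (V 1))))))
       (chain 1 Mn (replicate k (V 0)) (\<lambda>z. Eq z Mx)))"

lemma sat_shape:
  assumes "w' \<noteq> []"
  shows "sat bs L w' \<nu> \<rho> (shape k sharp) \<longleftrightarrow>
    (\<forall>i < length w'. i \<le> \<nu> 0 \<longrightarrow> w' ! i \<noteq> sharp) \<and>
    (\<forall>i < length w'. \<nu> 0 < i \<longrightarrow> w' ! i = sharp) \<and>
    (\<nu> 0 + 1) ^ k - 1 = length w' - 1"
proof -
  have "sat bs L w' \<nu> \<rho> (chain 1 Mn (replicate k (V 0)) (\<lambda>z. Eq z Mx)) \<longleftrightarrow>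
     hor (\<nu> 0 + 1) (teval (length w') \<nu> Mn) (map (teval (length w') \<nu>) (replicate k (V 0)))
       = length w' - 1"
    by (rule sat_chain[where P = "\<lambda>v. v = length w' - 1"]) (use assms in auto)
  also have "hor (\<nu> 0 + 1) (teval (length w') \<nu> Mn) (map (teval (length w') \<nu>) (replicate k (V 0)))
     = (\<nu> 0 + 1) ^ k - 1"
    using hor_rep[of "\<nu> 0 + 1" 0 k] by simp
  finally show ?thesis unfolding shape_def by (auto simp: not_less; meson not_le)
qed


theorem proposition5p1:
  fixes bs :: "'b list" and L :: "'b list set"
    and Sig :: "'a set" and A :: "'a list set" and \<phi> :: "'a form"
    and k :: nat and sharp :: 'a
  assumes "bs \<noteq> []" and "distinct bs" and "L \<subseteq> lists (set bs)"
    and "finite Sig"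
    and "k \<ge> 1"
    and "QLFO_sentence Sig (length bs) k \<phi>"
    and "defines_lang bs L Sig \<phi> A"
    and "sharp \<notin> Sig"
  shows "\<exists>\<phi>'. FOQ_sentence (Sig \<union> {sharp}) (length bs) \<phi>' \<and>
           defines_lang bs L (Sig \<union> {sharp}) \<phi>'
             {w @ replicate (length w ^ k - length w) sharp | w. w \<in> A}"
proof -
  obtain Xs \<psi>s where phi: "\<phi> = Q k Xs \<psi>s" and Xs: "Xs \<noteq> []" "distinct Xs"
    and len: "length \<psi>s = length bs - 1"
    and psis: "\<forall>\<psi> \<in> set \<psi>s. pureFO Sig k \<psi> \<and> fv \<psi> = {} \<and> frv \<psi> \<subseteq> set Xs"
    using assms(6) unfolding QLFO_sentence_def by blast
  define c where "c = 3 * k + 1"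
  define \<phi>' where "\<phi>' = Ex 0 (Conj (shape k sharp) (Q 1 Xs (map (tr c) \<psi>s)))"
  have A: "A = {w. w \<noteq> [] \<and> set w \<subseteq> Sig \<and> sat bs L w (\<lambda>_. 0) (\<lambda>_. {}) (Q k Xs \<psi>s)}"
    using assms(7) phi unfolding defines_lang_def by simp
  have wf: "FOQ_sentence (Sig \<union> {sharp}) (length bs) \<phi>'"
  proof -
    have "wf_FOQ (Sig \<union> {sharp}) (length bs) (shape k sharp)"
      unfolding shape_def by (auto intro!: wf_chain)
    moreover have "\<forall>\<psi> \<in> set \<psi>s. wf_FOQ (Sig \<union> {sharp}) (length bs) (tr c \<psi>)"
      using psis wf_tr by blast
    moreover have "fv (shape k sharp) \<subseteq> {0}"
    proof -
      have "fv (chain 1 Mn (replicate k (V 0)) (\<lambda>z. Eq z Mx)) \<subseteq>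
          tvars Mn \<union> (\<Union>t\<in>set (replicate k (V 0)). tvars t) \<union> {0}"
        by (rule fv_chain) simp
      moreover have "(\<Union>t\<in>set (replicate k (V 0)). tvars t) \<subseteq> {0}" by auto
      ultimately show ?thesis unfolding shape_def by auto
    qed
    moreover have "\<forall>\<psi> \<in> set \<psi>s. fv (tr c \<psi>) \<subseteq> {0}"
      using psis fv_tr[of c] by fastforce
    moreover have "frv (shape k sharp) = {}"
    proof -
      have "frv (chain 1 Mn (replicate k (V 0)) (\<lambda>z. Eq z Mx)) \<subseteq> {}"
        by (rule frv_chain) simp
      then show ?thesis unfolding shape_def by auto
    qed
    moreover have "\<forall>\<psi> \<in> set \<psi>s. frv (tr c \<psi>) \<subseteq> set Xs"
      using psis frv_tr by blast
    ultimately show ?thesis unfolding FOQ_sentence_def \<phi>'_def using Xs len by auto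
  qed
  have key: "sat bs L w' (\<lambda>_. 0) (\<lambda>_. {}) \<phi>' \<longleftrightarrow>
      (\<exists>w. w \<in> A \<and> w' = w @ replicate (length w ^ k - length w) sharp)"
    if w': "w' \<noteq> []" "set w' \<subseteq> Sig \<union> {sharp}" for w'
  proof
    assume "sat bs L w' (\<lambda>_. 0) (\<lambda>_. {}) \<phi>'"
    then obtain y where y: "y < length w'"
      and sh: "sat bs L w' ((\<lambda>_. 0)(0 := y)) (\<lambda>_. {}) (shape k sharp)"
      and q: "sat bs L w' ((\<lambda>_. 0)(0 := y)) (\<lambda>_. {}) (Q 1 Xs (map (tr c) \<psi>s))"
      unfolding \<phi>'_def by auto
    have s1: "\<forall>i < length w'. i \<le> y \<longrightarrow> w' ! i \<noteq> sharp"
      and s2: "\<forall>i < length w'. y < i \<longrightarrow> w' ! i = sharp"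
      and s3: "(y + 1) ^ k - 1 = length w' - 1"
    proof -
      have "sat bs L w' ((\<lambda>_. 0)(0 := y)) (\<lambda>_. {}) (shape k sharp) \<longleftrightarrow>
        (\<forall>i < length w'. i \<le> y \<longrightarrow> w' ! i \<noteq> sharp) \<and>
        (\<forall>i < length w'. y < i \<longrightarrow> w' ! i = sharp) \<and> (y + 1) ^ k - 1 = length w' - 1"
        using sat_shape[OF w'(1), of bs L "(\<lambda>_. 0)(0 := y)" "\<lambda>_. {}" k sharp] by simp
      then show "\<forall>i < length w'. i \<le> y \<longrightarrow> w' ! i \<noteq> sharp"
        "\<forall>i < length w'. y < i \<longrightarrow> w' ! i = sharp" "(y + 1) ^ k - 1 = length w' - 1"
        using sh by blast+
    qed
    define w where "w = take (y + 1) w'"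
    have lw: "length w = y + 1" using y unfolding w_def by simp
    have pw: "(y + 1) ^ k > 0" by simp
    have N: "length w' = (y + 1) ^ k" using s3 pw w'(1) by (cases "length w'") auto
    have dr: "drop (y + 1) w' = replicate (length w' - (y + 1)) sharp"
      using s2 by (intro nth_equalityI) auto
    have w'eq: "w' = w @ replicate (length w ^ k - length w) sharp"
      using dr N lw unfolding w_def by (metis append_take_drop_id)
    have wne: "w \<noteq> []" using lw by auto
    have wsig: "set w \<subseteq> Sig"
    proof
      fix a assume "a \<in> set w"
      then obtain i where i: "i < length w" "w ! i = a" by (auto simp: in_set_conv_nth)
      then have "w' ! i = a" "i < length w'" using y lw unfolding w_def by auto
      then show "a \<in> Sig" using s1 i lw w'(2) by (metis Un_insert_right insert_iff less_Suc_eq_le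
            nth_mem subsetD sup_bot.right_neutral add.commute plus_1_eq_Suc)
    qed
    have psis': "\<forall>\<psi>\<in>set \<psi>s. pureFO Sig k \<psi> \<and> fv \<psi> = {}" using psis by blast
    have "sat bs L w' ((\<lambda>_. 0)(0 := y)) (\<lambda>_. {}) (Q 1 Xs (map (tr c) \<psi>s)) \<longleftrightarrow>
         sat bs L w (\<lambda>_. 0) (\<lambda>_. {}) (Q k Xs \<psi>s)"
      by (rule sat_Q[OF psis' wne assms(5) w'eq c_def]) (use lw in \<open>auto simp: c_def\<close>)
    then have "sat bs L w (\<lambda>_. 0) (\<lambda>_. {}) (Q k Xs \<psi>s)" using q by blast
    then show "\<exists>w. w \<in> A \<and> w' = w @ replicate (length w ^ k - length w) sharp"
      using A wne wsig w'eq by blast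
  next
    assume "\<exists>w. w \<in> A \<and> w' = w @ replicate (length w ^ k - length w) sharp"
    then obtain w where wA: "w \<in> A" and w'eq: "w' = w @ replicate (length w ^ k - length w) sharp"
      by blast
    have wne: "w \<noteq> []" and wsig: "set w \<subseteq> Sig"
      and qw: "sat bs L w (\<lambda>_. 0) (\<lambda>_. {}) (Q k Xs \<psi>s)" using wA A by auto
    let ?n = "length w"
    let ?y = "?n - 1"
    have n: "0 < ?n" using wne by simp
    have le: "?n \<le> ?n ^ k" using n assms(5) by (intro self_le_power) linarith+
    have N: "length w' = ?n ^ k" using w'eq le by simp
    have y: "?y < length w'" using N le n by linarith
    have ny: "?y + 1 = ?n" using n by simp
    have "sat bs L w' ((\<lambda>_. 0)(0 := ?y)) (\<lambda>_. {}) (shape k sharp)"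
    proof (subst sat_shape[OF w'(1)], intro conjI allI impI)
      fix i assume "i < length w'" "i \<le> ((\<lambda>_. 0)(0 := ?y)) 0"
      then have "i < ?n" using n by (simp; linarith)
      then have "w' ! i = w ! i" "w ! i \<in> Sig" using w'eq wsig by (auto simp: nth_append)
      then show "w' ! i \<noteq> sharp" using assms(8) by auto
    next
      fix i assume "i < length w'" "((\<lambda>_. 0)(0 := ?y)) 0 < i"
      then have "\<not> i < ?n" "i - ?n < ?n ^ k - ?n" using n N by auto
      then show "w' ! i = sharp" using w'eq by (simp add: nth_append)
    next
      show "(((\<lambda>_. 0)(0 := ?y)) 0 + 1) ^ k - 1 = length w' - 1" using ny N by simp
    qed
    moreover have "sat bs L w' ((\<lambda>_. 0)(0 := ?y)) (\<lambda>_. {}) (Q 1 Xs (map (tr c) \<psi>s))"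
    proof -
      have psis': "\<forall>\<psi>\<in>set \<psi>s. pureFO Sig k \<psi> \<and> fv \<psi> = {}" using psis by blast
      have "sat bs L w' ((\<lambda>_. 0)(0 := ?y)) (\<lambda>_. {}) (Q 1 Xs (map (tr c) \<psi>s)) \<longleftrightarrow>
         sat bs L w (\<lambda>_. 0) (\<lambda>_. {}) (Q k Xs \<psi>s)"
        by (rule sat_Q[OF psis' wne assms(5) w'eq c_def]) (auto simp: c_def)
      then show ?thesis using qw by blast
    qed
    ultimately show "sat bs L w' (\<lambda>_. 0) (\<lambda>_. {}) \<phi>'"
      unfolding \<phi>'_def using y by auto
  qed
  have "defines_lang bs L (Sig \<union> {sharp}) \<phi>'
             {w @ replicate (length w ^ k - length w) sharp | w. w \<in> A}"
    unfolding defines_lang_def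
  proof (intro set_eqI iffI)
    fix w' assume "w' \<in> {w @ replicate (length w ^ k - length w) sharp | w. w \<in> A}"
    then obtain w where wA: "w \<in> A" and w'eq: "w' = w @ replicate (length w ^ k - length w) sharp"
      by blast
    have "w \<noteq> []" "set w \<subseteq> Sig" using wA A by auto
    then have ne: "w' \<noteq> []" and st: "set w' \<subseteq> Sig \<union> {sharp}" using w'eq by auto
    then show "w' \<in> {w. w \<noteq> [] \<and> set w \<subseteq> Sig \<union> {sharp} \<and> sat bs L w (\<lambda>_. 0) (\<lambda>_. {}) \<phi>'}"
      using key[OF ne st] wA w'eq by blast
  next
    fix w' assume "w' \<in> {w. w \<noteq> [] \<and> set w \<subseteq> Sig \<union> {sharp} \<and> sat bs L w (\<lambda>_. 0) (\<lambda>_. {}) \<phi>'}"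
    then show "w' \<in> {w @ replicate (length w ^ k - length w) sharp | w. w \<in> A}"
      using key by blast
  qed
  then show ?thesis using wf by blast
qed

end
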